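(* Every open subset of an E-space $X$ is the union of a $\sigma$-point-finite collection of cozero-sets of $X$.
   Context: "Space" means topological $T_0$-space. A zero-set (cozero-set) of $X$ is $f^{-1}(0)$ (resp. its complement) for continuous $f:X\to[0,1]$. A U-representation of $V\subseteq X$ is a sequence $(U_n(V))_{n\in\mathbb{N}}$ with $V=\bigcup_n U_n(V)$, $U_n(V)\subseteq U_{n+1}(V)$, $U_{2n-1}(V)$ a zero-set, $U_{2n}(V)$ a cozero-set. A family $\alpha$ is an almost subbase of $X$ if U-representations of its members can be chosen so that $\alpha\cup\{X\setminus U_{2n-1}(V):V\in\alpha,n\in\mathbb{N}\}$ is a subbase of $X$. A family is strongly point-finite if every countably infinite subfamily contains a finite subfamily with empty intersection; $\sigma$-strongly point-finite ($\sigma$-point-finite) means a countable union of strongly point-finite (point-finite) families. An E-space is a space with a $\sigma$-strongly point-finite almost subbase. *)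

theory Defs
  imports "HOL-Analysis.Analysis"
begin

definition zero_set :: "'a topology \<Rightarrow> 'a set \<Rightarrow> bool" where
  "zero_set X Z \<longleftrightarrow> (\<exists>f. continuous_map X (top_of_set {0..1::real}) f \<and>
      Z = {x \<in> topspace X. f x = 0})"

definition cozero_set :: "'a topology \<Rightarrow> 'a set \<Rightarrow> bool" where
  "cozero_set X C \<longleftrightarrow> (\<exists>f. continuous_map X (top_of_set {0..1::real}) f \<and>
      C = topspace X - {x \<in> topspace X. f x = 0})"

text \<open>U-representation, indexed by n >= 1 as in the paper (the value at 0 is irrelevant).\<close>
definition U_representation :: "'a topology \<Rightarrow> 'a set \<Rightarrow> (nat \<Rightarrow> 'a set) \<Rightarrow> bool" where
  "U_representation X V U \<longleftrightarrow>
     V = (\<Union>n\<in>{1..}. U n) \<and>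
     (\<forall>n\<ge>1. U n \<subseteq> U (Suc n)) \<and>
     (\<forall>n\<ge>1. zero_set X (U (2*n - 1))) \<and>
     (\<forall>n\<ge>1. cozero_set X (U (2*n)))"

text \<open>Subbase: finite intersections (the empty one being the whole space) form a base.\<close>
definition subbase_of :: "'a topology \<Rightarrow> 'a set set \<Rightarrow> bool" where
  "subbase_of X S \<longleftrightarrow> S \<subseteq> Pow (topspace X) \<and>
     topology_generated_by (insert (topspace X) S) = X"

definition almost_subbase :: "'a topology \<Rightarrow> 'a set set \<Rightarrow> bool" where
  "almost_subbase X \<alpha> \<longleftrightarrow> (\<exists>U. (\<forall>V\<in>\<alpha>. U_representation X V (U V)) \<and>
     subbase_of X (\<alpha> \<union> {topspace X - U V (2*n - 1) | V n. V \<in> \<alpha> \<and> n \<ge> 1}))"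

definition point_finite :: "'a topology \<Rightarrow> 'a set set \<Rightarrow> bool" where
  "point_finite X \<gamma> \<longleftrightarrow> (\<forall>x\<in>topspace X. finite {A \<in> \<gamma>. x \<in> A})"

definition strongly_point_finite :: "'a set set \<Rightarrow> bool" where
  "strongly_point_finite \<gamma> \<longleftrightarrow>
     (\<forall>\<beta>\<subseteq>\<gamma>. infinite \<beta> \<and> countable \<beta> \<longrightarrow>
        (\<exists>\<delta>\<subseteq>\<beta>. finite \<delta> \<and> \<Inter>\<delta> = {}))"

definition sigma_point_finite :: "'a topology \<Rightarrow> 'a set set \<Rightarrow> bool" where
  "sigma_point_finite X \<gamma> \<longleftrightarrow> (\<exists>g::nat \<Rightarrow> 'a set set. \<gamma> = (\<Union>n. g n) \<and> (\<forall>n. point_finite X (g n)))"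

definition sigma_strongly_point_finite :: "'a set set \<Rightarrow> bool" where
  "sigma_strongly_point_finite \<gamma> \<longleftrightarrow>
     (\<exists>g::nat \<Rightarrow> 'a set set. \<gamma> = (\<Union>n. g n) \<and> (\<forall>n. strongly_point_finite (g n)))"

definition E_space :: "'a topology \<Rightarrow> bool" where
  "E_space X \<longleftrightarrow> t0_space X \<and> (\<exists>\<alpha>. almost_subbase X \<alpha> \<and> sigma_strongly_point_finite \<alpha>)"

end

theory Submission
  imports Defs
begin


lemma finite_core:
  fixes Z :: "'i \<Rightarrow> 'a set"
  assumes nic: "\<And>S. S \<subseteq> \<Phi> \<Longrightarrow> infinite S \<Longrightarrow> \<exists>s\<subseteq>S. finite s \<and> (\<forall>y. \<exists>i\<in>s. y \<notin> Z i)"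
  and GGf: "\<And>G. G \<in> GG \<Longrightarrow> finite G \<and> G \<subseteq> \<Phi>"
  shows "\<exists>G0 \<subseteq> GG. finite G0 \<and> (\<forall>y. (\<exists>G\<in>GG. \<forall>i\<in>G. y \<notin> Z i) \<longrightarrow> (\<exists>G\<in>G0. \<forall>i\<in>G. y \<notin> Z i))"
proof -
  define cen where "cen s \<longleftrightarrow> finite s \<and> s \<subseteq> \<Phi> \<and> (\<exists>y. \<forall>i\<in>s. y \<in> Z i)" for s
  define R where "R = {(s', s). cen s' \<and> cen s \<and> s \<subset> s'}"
  have wfR: "wf R"
    unfolding wf_iff_no_infinite_down_chain
  proof
    assume "\<exists>f. \<forall>i. (f (Suc i), f i) \<in> R"
    then obtain f where f: "\<And>i. (f (Suc i), f i) \<in> R" by blast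
    have fs: "f i \<subset> f (Suc i)" and cf: "cen (f i)" for i using f[of i] by (auto simp: R_def)
    have mono: "f i \<subseteq> f j" if "i \<le> j" for i j
      using lift_Suc_mono_le[of f, OF _ that] fs by blast
    have card: "card (f i) \<ge> i" for i
    proof (induction i)
      case (Suc i)
      have "card (f i) < card (f (Suc i))"
        using psubset_card_mono[OF _ fs[of i]] cf[of "Suc i"] by (auto simp: cen_def)
      then show ?case using Suc by simp
    qed simp
    define S where "S = (\<Union>i. f i)"
    have SP: "S \<subseteq> \<Phi>" using cf by (auto simp: S_def cen_def)
    have "infinite S"
    proof
      assume fin: "finite S"
      have "card (f (Suc (card S))) \<le> card S"
        by (rule card_mono[OF fin]) (auto simp: S_def)
      with card[of "Suc (card S)"] show False by simp
    qed
    then obtain s where s: "s \<subseteq> S" "finite s" "\<forall>y. \<exists>i\<in>s. y \<notin> Z i"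
      using nic[OF SP] by blast
    have "\<forall>i\<in>s. eventually (\<lambda>N. i \<in> f N) sequentially"
    proof
      fix i assume "i \<in> s"
      then obtain N where "i \<in> f N" using s(1) by (auto simp: S_def)
      then show "eventually (\<lambda>N. i \<in> f N) sequentially"
        unfolding eventually_sequentially using mono by auto
    qed
    then have "eventually (\<lambda>N. \<forall>i\<in>s. i \<in> f N) sequentially"
      by (rule eventually_ball_finite[OF s(2)])
    then obtain N where "\<forall>i\<in>s. i \<in> f N" unfolding eventually_sequentially by auto
    then have "s \<subseteq> f N" by auto
    moreover obtain y where "\<forall>i\<in>f N. y \<in> Z i" using cf[of N] by (auto simp: cen_def)
    ultimately show False using s(3) by blast
  qed
  have main: "cen s \<longrightarrow> (\<exists>Gs\<subseteq>GG. finite Gs \<and> (\<forall>y. (\<forall>i\<in>s. y \<in> Z i) \<longrightarrow>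
       (\<exists>G\<in>GG. \<forall>i\<in>G. y \<notin> Z i) \<longrightarrow> (\<exists>G\<in>Gs. \<forall>i\<in>G. y \<notin> Z i)))" for s
  proof (induction s rule: wf_induct[OF wfR])
    case (1 s)
    show ?case
    proof
      assume cs: "cen s"
      show "\<exists>Gs\<subseteq>GG. finite Gs \<and> (\<forall>y. (\<forall>i\<in>s. y \<in> Z i) \<longrightarrow>
         (\<exists>G\<in>GG. \<forall>i\<in>G. y \<notin> Z i) \<longrightarrow> (\<exists>G\<in>Gs. \<forall>i\<in>G. y \<notin> Z i))"
      proof (cases "\<forall>G\<in>GG. G \<inter> s \<noteq> {}")
        case True
        then show ?thesis by (intro exI[of _ "{}"]) blast
      next
        case False
        then obtain Gs where Gs: "Gs \<in> GG" "Gs \<inter> s = {}" by blast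
        define W' where "W' = {w \<in> Gs. cen (insert w s)}"
        have "\<forall>w\<in>W'. \<exists>H\<subseteq>GG. finite H \<and> (\<forall>y. (\<forall>i\<in>insert w s. y \<in> Z i) \<longrightarrow>
         (\<exists>G\<in>GG. \<forall>i\<in>G. y \<notin> Z i) \<longrightarrow> (\<exists>G\<in>H. \<forall>i\<in>G. y \<notin> Z i))"
        proof
          fix w assume w: "w \<in> W'"
          then have "w \<notin> s" using Gs(2) by (auto simp: W'_def)
          then have "(insert w s, s) \<in> R" using w cs by (auto simp: R_def W'_def)
          then show "\<exists>H\<subseteq>GG. finite H \<and> (\<forall>y. (\<forall>i\<in>insert w s. y \<in> Z i) \<longrightarrow>
           (\<exists>G\<in>GG. \<forall>i\<in>G. y \<notin> Z i) \<longrightarrow> (\<exists>G\<in>H. \<forall>i\<in>G. y \<notin> Z i))"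
            using 1[rule_format, of "insert w s"] w by (simp add: W'_def)
        qed
        then obtain h where h: "\<And>w. w\<in>W' \<Longrightarrow> h w \<subseteq> GG \<and> finite (h w) \<and> (\<forall>y. (\<forall>i\<in>insert w s. y \<in> Z i) \<longrightarrow>
         (\<exists>G\<in>GG. \<forall>i\<in>G. y \<notin> Z i) \<longrightarrow> (\<exists>G\<in>h w. \<forall>i\<in>G. y \<notin> Z i))"
          by metis
        have finW: "finite W'" using GGf[OF Gs(1)] by (auto simp: W'_def)
        show ?thesis
        proof (intro exI[of _ "insert Gs (\<Union>(h ` W'))"] conjI allI impI)
          show "insert Gs (\<Union>(h ` W')) \<subseteq> GG" using h Gs(1) by blast
          show "finite (insert Gs (\<Union>(h ` W')))" using h finW by auto
          fix y assume ys: "\<forall>i\<in>s. y \<in> Z i" and ex: "\<exists>G\<in>GG. \<forall>i\<in>G. y \<notin> Z i"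
          show "\<exists>G\<in>insert Gs (\<Union>(h ` W')). \<forall>i\<in>G. y \<notin> Z i"
          proof (cases "\<forall>i\<in>Gs. y \<notin> Z i")
            case True then show ?thesis by blast
          next
            case False
            then obtain w where w: "w \<in> Gs" "y \<in> Z w" by blast
            have "w \<in> W'" using w ys cs GGf[OF Gs(1)] unfolding W'_def cen_def
              by (intro CollectI conjI) (auto intro!: exI[of _ y])
            have yy: "\<forall>i\<in>insert w s. y \<in> Z i" using ys w by auto
            obtain G where "G \<in> h w" "\<forall>i\<in>G. y \<notin> Z i"
              using h[OF \<open>w \<in> W'\<close>, THEN conjunct2, THEN conjunct2, rule_format, OF yy[rule_format] ex] by blast
            then show ?thesis using \<open>w \<in> W'\<close> by blast
          qed
        qed
      qed
    qed
  qed
  have "cen {}" by (simp add: cen_def)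
  with main[of "{}"] show ?thesis by auto
qed


lemma cozero_topspace: "cozero_set X (topspace X)"
  unfolding cozero_set_def
  by (rule exI[of _ "\<lambda>x. 1"]) (auto simp: continuous_map_in_subtopology)

lemma cozero_diff_zero: "zero_set X Z \<Longrightarrow> cozero_set X (topspace X - Z)"
  unfolding cozero_set_def zero_set_def by blast

lemma cozero_subset: "cozero_set X C \<Longrightarrow> C \<subseteq> topspace X"
  unfolding cozero_set_def by blast

lemma cozero_Int:
  assumes "cozero_set X A" "cozero_set X B" shows "cozero_set X (A \<inter> B)"
proof -
  obtain f where f: "continuous_map X (top_of_set {0..1::real}) f" "A = topspace X - {x \<in> topspace X. f x = 0}"
    using assms(1) unfolding cozero_set_def by blast
  obtain g where g: "continuous_map X (top_of_set {0..1::real}) g" "B = topspace X - {x \<in> topspace X. g x = 0}"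
    using assms(2) unfolding cozero_set_def by blast
  have fc: "continuous_map X euclidean f" "f ` topspace X \<subseteq> {0..1}"
    using f(1) by (auto simp: continuous_map_in_subtopology)
  have gc: "continuous_map X euclidean g" "g ` topspace X \<subseteq> {0..1}"
    using g(1) by (auto simp: continuous_map_in_subtopology)
  have c1: "continuous_map X euclidean (\<lambda>x. f x * g x)" using fc gc by (intro continuous_intros)
  have c2: "(\<lambda>x. f x * g x) ` topspace X \<subseteq> {0..1}"
  proof (rule image_subsetI)
    fix x assume x: "x \<in> topspace X"
    have "0 \<le> f x" "f x \<le> 1" "0 \<le> g x" "g x \<le> 1" using fc(2) gc(2) x by auto
    then show "f x * g x \<in> {0..1}" by (simp add: mult_le_one)
  qed
  have "continuous_map X (top_of_set {0..1::real}) (\<lambda>x. f x * g x)"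
    using c1 c2 by (simp add: continuous_map_in_subtopology image_subset_iff_funcset)
  moreover have "A \<inter> B = topspace X - {x \<in> topspace X. f x * g x = 0}" using f(2) g(2) by auto
  ultimately show ?thesis unfolding cozero_set_def by blast
qed

lemma cozero_Inter:
  assumes "finite C" "\<forall>c\<in>C. cozero_set X c" shows "cozero_set X (topspace X \<inter> \<Inter>C)"
  using assms
proof (induction C rule: finite_induct)
  case empty then show ?case using cozero_topspace by simp
next
  case (insert c C)
  have "topspace X \<inter> \<Inter>(insert c C) = c \<inter> (topspace X \<inter> \<Inter>C)"
    using cozero_subset[of X c] insert.prems by auto
  then show ?case using insert cozero_Int by auto
qed

lemma gen_basic:
  assumes "generate_topology_on S W" "x \<in> W"
  shows "\<exists>F. finite F \<and> F \<subseteq> S \<and> F \<noteq> {} \<and> x \<in> \<Inter>F \<and> \<Inter>F \<subseteq> W"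
  using assms
proof (induction arbitrary: x rule: generate_topology_on.induct)
  case Empty then show ?case by simp
next
  case (Int a b)
  from Int.prems have xa: "x \<in> a" and xb: "x \<in> b" by auto
  obtain F1 where F1: "finite F1" "F1 \<subseteq> S" "F1 \<noteq> {}" "x \<in> \<Inter>F1" "\<Inter>F1 \<subseteq> a" using Int.IH(1)[OF xa] by metis
  obtain F2 where F2: "finite F2" "F2 \<subseteq> S" "F2 \<noteq> {}" "x \<in> \<Inter>F2" "\<Inter>F2 \<subseteq> b" using Int.IH(2)[OF xb] by metis
  have "finite (F1 \<union> F2)" "F1 \<union> F2 \<subseteq> S" "F1 \<union> F2 \<noteq> {}" "x \<in> \<Inter>(F1 \<union> F2)" "\<Inter>(F1 \<union> F2) \<subseteq> a \<inter> b"
    using F1 F2 by auto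
  then show ?case by metis
next
  case (UN K)
  then obtain k where k: "k \<in> K" "x \<in> k" by auto
  obtain F where F: "finite F" "F \<subseteq> S" "F \<noteq> {}" "x \<in> \<Inter>F" "\<Inter>F \<subseteq> k" using UN.IH[OF k] by metis
  have "\<Inter>F \<subseteq> \<Union>K" using F(5) k(1) by auto
  then show ?case using F by metis
next
  case (Basis s)
  have "finite {s}" "{s} \<subseteq> S" "{s} \<noteq> {}" "x \<in> \<Inter>{s}" "\<Inter>{s} \<subseteq> s" using Basis by auto
  then show ?case by metis
qed

lemma spf_pf:
  assumes "strongly_point_finite \<gamma>" shows "finite {V\<in>\<gamma>. y \<in> V}"
proof (rule ccontr)
  assume "infinite {V\<in>\<gamma>. y \<in> V}"
  from infinite_countable_subset[OF this] obtain f :: "nat \<Rightarrow> _" where f: "inj f" "range f \<subseteq> {V\<in>\<gamma>. y \<in> V}"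
    by (elim exE conjE)
  have i: "infinite (range f)" by (rule range_inj_infinite[OF f(1)])
  have c: "countable (range f)" by simp
  have sub: "range f \<subseteq> \<gamma>" using f(2) by auto
  have A: "\<forall>\<beta>\<subseteq>\<gamma>. infinite \<beta> \<and> countable \<beta> \<longrightarrow> (\<exists>\<delta>\<subseteq>\<beta>. finite \<delta> \<and> \<Inter>\<delta> = {})"
    using assms by (simp add: strongly_point_finite_def)
  have "\<exists>\<delta>\<subseteq>range f. finite \<delta> \<and> \<Inter>\<delta> = {}" using A sub i c by simp
  then obtain \<delta> where d: "\<delta> \<subseteq> range f" "finite \<delta>" "\<Inter>\<delta> = {}" by (elim exE conjE)
  have "y \<in> \<Inter>\<delta>"
  proof
    fix V assume "V \<in> \<delta>" then have "V \<in> range f" using d(1) by blast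
    then show "y \<in> V" using f(2) by blast
  qed
  then show False using d(3) by simp
qed

lemma urep_mono:
  assumes "U_representation X V U" "1 \<le> i" "i \<le> j" shows "U i \<subseteq> U j"
proof -
  have m: "\<forall>n\<ge>1. U n \<subseteq> U (Suc n)" using assms(1) by (simp add: U_representation_def)
  have "U i \<subseteq> U (i + k)" for k
  proof (induction k)
    case (Suc k)
    have "U (i + k) \<subseteq> U (Suc (i + k))" using m assms(2) by simp
    then show ?case using Suc by simp
  qed simp
  from this[of "j - i"] show ?thesis using assms(3) by simp
qed

lemma urep_sub: "U_representation X V U \<Longrightarrow> 1 \<le> j \<Longrightarrow> U j \<subseteq> V"
  unfolding U_representation_def by auto

lemma urep_mem: "U_representation X V U \<Longrightarrow> x \<in> V \<Longrightarrow> \<exists>j\<ge>1. x \<in> U j"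
  unfolding U_representation_def by auto




lemma nic_lemma:
  fixes U :: "'a set \<Rightarrow> nat \<Rightarrow> 'a set"
  assumes spf: "\<forall>k. strongly_point_finite (ga k)"
  and sub: "\<forall>V\<in>(\<Union>k\<in>{..m}. ga k). \<forall>j\<ge>1. U V j \<subseteq> V"
  and S: "S \<subseteq> (\<Union>k\<in>{..m}. ga k) \<times> {1..m}" "infinite S"
  shows "\<exists>s\<subseteq>S. finite s \<and> (\<forall>y. \<exists>i\<in>s. y \<notin> U (fst i) (2 * snd i - 1))"
proof -
  have "S \<subseteq> fst ` S \<times> {1..m}" using S(1) by force
  then have inf1: "infinite (fst ` S)" using S(2) finite_subset by blast
  have fsub: "fst ` S \<subseteq> (\<Union>k\<in>{..m}. ga k)" using S(1) by (force simp: subset_iff)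
  have "\<exists>k\<le>m. infinite (fst ` S \<inter> ga k)"
  proof (rule ccontr)
    assume "\<not> ?thesis"
    then have "finite (\<Union>k\<in>{..m}. fst ` S \<inter> ga k)" by (intro finite_UN_I) auto
    moreover have "fst ` S = (\<Union>k\<in>{..m}. fst ` S \<inter> ga k)" using fsub by auto
    ultimately show False using inf1 by simp
  qed
  then obtain k where k: "k \<le> m" "infinite (fst ` S \<inter> ga k)" by blast
  from infinite_countable_subset[OF k(2)] obtain f :: "nat \<Rightarrow> _" where
    f: "inj f" "range f \<subseteq> fst ` S \<inter> ga k" by (elim exE conjE)
  have i: "infinite (range f)" by (rule range_inj_infinite[OF f(1)])
  have c: "countable (range f)" by simp
  have rsub: "range f \<subseteq> ga k" using f(2) by auto
  have A: "\<forall>\<beta>\<subseteq>ga k. infinite \<beta> \<and> countable \<beta> \<longrightarrow> (\<exists>\<delta>\<subseteq>\<beta>. finite \<delta> \<and> \<Inter>\<delta> = {})"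
    using spf by (simp add: strongly_point_finite_def)
  have "\<exists>\<delta>\<subseteq>range f. finite \<delta> \<and> \<Inter>\<delta> = {}" using A rsub i c by simp
  then obtain \<delta> where d: "\<delta> \<subseteq> range f" "finite \<delta>" "\<Inter>\<delta> = {}" by (elim exE conjE)
  have "\<forall>V\<in>\<delta>. \<exists>n. (V, n) \<in> S"
  proof
    fix V assume "V \<in> \<delta>" then have "V \<in> fst ` S" using d(1) f(2) by blast
    then show "\<exists>n. (V, n) \<in> S" by force
  qed
  then obtain nn where nn: "\<And>V. V \<in> \<delta> \<Longrightarrow> (V, nn V) \<in> S" by metis
  define s where "s = (\<lambda>V. (V, nn V)) ` \<delta>"
  have s1: "s \<subseteq> S" using nn by (auto simp: s_def)
  have s2: "finite s" using d(2) by (simp add: s_def)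
  have "\<forall>y. \<exists>i\<in>s. y \<notin> U (fst i) (2 * snd i - 1)"
  proof (rule allI, rule ccontr)
    fix y assume "\<not> (\<exists>i\<in>s. y \<notin> U (fst i) (2 * snd i - 1))"
    then have yin: "\<And>V. V \<in> \<delta> \<Longrightarrow> y \<in> U V (2 * nn V - 1)" by (auto simp: s_def)
    have "y \<in> \<Inter>\<delta>"
    proof
      fix V assume V: "V \<in> \<delta>"
      have "(V, nn V) \<in> S" by (rule nn[OF V])
      then have "V \<in> (\<Union>k\<in>{..m}. ga k)" "nn V \<ge> 1" using S(1) by auto
      moreover have "2 * nn V - 1 \<ge> 1" using \<open>nn V \<ge> 1\<close> by simp
      ultimately have "U V (2 * nn V - 1) \<subseteq> V" using sub by blast
      then show "y \<in> V" using yin[OF V] by blast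
    qed
    then show False using d(3) by simp
  qed
  then show ?thesis using s1 s2 by blast
qed



theorem proposition5p7:
  fixes X :: "'a topology" and W :: "'a set"
  assumes "E_space X" and "openin X W"
  shows "\<exists>\<gamma>. sigma_point_finite X \<gamma> \<and> (\<forall>C\<in>\<gamma>. cozero_set X C) \<and> \<Union>\<gamma> = W"
proof -
  obtain \<alpha> where as: "almost_subbase X \<alpha>" and ssp: "sigma_strongly_point_finite \<alpha>"
    using assms(1) unfolding E_space_def by blast
  obtain ga :: "nat \<Rightarrow> 'a set set" where ga: "\<alpha> = (\<Union>n. ga n)" "\<forall>n. strongly_point_finite (ga n)"
    using ssp unfolding sigma_strongly_point_finite_def by blast
  define S where "S U = \<alpha> \<union> {topspace X - U V (2*n - 1) | V n. V \<in> \<alpha> \<and> n \<ge> 1}" for U :: "'a set \<Rightarrow> nat \<Rightarrow> 'a set"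
  obtain U where U: "\<forall>V\<in>\<alpha>. U_representation X V (U V)" and sb: "subbase_of X (S U)"
    using as unfolding almost_subbase_def S_def by blast
  have Xeq: "topology_generated_by (insert (topspace X) (S U)) = X" using sb by (simp add: subbase_of_def)
  have genW: "generate_topology_on (insert (topspace X) (S U)) W"
    using assms(2) Xeq openin_topology_generated_by_iff by metis
  have Wsub: "W \<subseteq> topspace X" using assms(2) by (rule openin_subset)
  define Am where "Am m = (\<Union>k\<in>{..m}. ga k)" for m
  have Am\<alpha>: "Am m \<subseteq> \<alpha>" for m using ga(1) by (auto simp: Am_def)
  define Z where "Z p = U (fst p) (2 * snd p - 1)" for p
  define Pm where "Pm m F = topspace X \<inter> \<Inter>((\<lambda>V. U V (2*m)) ` F)" for m F
  define N where "N G = topspace X - \<Union>(Z ` G)" for G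
  define GG where "GG m F = {G. finite G \<and> G \<subseteq> Am m \<times> {1..m} \<and> Pm m F \<inter> N G \<subseteq> W}" for m F
  define spec where "spec m F G0 \<longleftrightarrow> G0 \<subseteq> GG m F \<and> finite G0 \<and>
     (\<forall>y. (\<exists>G\<in>GG m F. \<forall>i\<in>G. y \<notin> Z i) \<longrightarrow> (\<exists>G\<in>G0. \<forall>i\<in>G. y \<notin> Z i))" for m F G0
  have Usub: "U V j \<subseteq> V" if "V \<in> \<alpha>" "j \<ge> 1" for V j
    using urep_sub[of X V "U V" j] U that by blast
  have ex: "\<exists>G0. spec m F G0" for m F
  proof -
    have sub: "\<forall>V\<in>(\<Union>k\<in>{..m}. ga k). \<forall>j\<ge>1. U V j \<subseteq> V"
      using Usub Am\<alpha> unfolding Am_def by blast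
    have nic: "\<exists>s\<subseteq>T. finite s \<and> (\<forall>y. \<exists>i\<in>s. y \<notin> Z i)"
      if "T \<subseteq> Am m \<times> {1..m}" "infinite T" for T
      unfolding Z_def by (rule nic_lemma[OF ga(2) sub]) (use that in \<open>auto simp: Am_def\<close>)
    have gf: "finite G \<and> G \<subseteq> Am m \<times> {1..m}" if "G \<in> GG m F" for G
      using that by (simp add: GG_def)
    from finite_core[OF nic gf] show ?thesis unfolding spec_def by blast
  qed
  define G0 where "G0 m F = (SOME G0. spec m F G0)" for m F
  have G0: "spec m F (G0 m F)" for m F unfolding G0_def using ex by (rule someI_ex)
  define g where "g m = (if m = 0 then {} else {Pm m F \<inter> N G | F G. finite F \<and> F \<subseteq> Am m \<and> G \<in> G0 m F})" for m
  define \<gamma> where "\<gamma> = (\<Union>m. g m)"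
  have Ucoz: "cozero_set X (U V (2*n))" if "V \<in> \<alpha>" "n \<ge> 1" for V n
    using U that unfolding U_representation_def by blast
  have Uzero: "zero_set X (U V (2*n - 1))" if "V \<in> \<alpha>" "n \<ge> 1" for V n
    using U that unfolding U_representation_def by blast
  have pfA: "finite {V \<in> Am m. y \<in> V}" for m y
  proof -
    have "{V \<in> Am m. y \<in> V} = (\<Union>k\<in>{..m}. {V \<in> ga k. y \<in> V})" by (auto simp: Am_def)
    moreover have "finite (\<Union>k\<in>{..m}. {V \<in> ga k. y \<in> V})"
      using spf_pf[OF ga(2)[rule_format]] by (intro finite_UN_I) auto
    ultimately show ?thesis by simp
  qed
  show ?thesis
  proof (intro exI[of _ \<gamma>] conjI)
    show "sigma_point_finite X \<gamma>"
      unfolding sigma_point_finite_def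
    proof (intro exI[of _ g] conjI allI)
      show "\<gamma> = \<Union>(range g)" by (simp add: \<gamma>_def)
      fix m show "point_finite X (g m)"
        unfolding point_finite_def
      proof
        fix y assume "y \<in> topspace X"
        show "finite {A \<in> g m. y \<in> A}"
        proof (cases "m = 0")
          case True then show ?thesis by (simp add: g_def)
        next
          case False
          let ?I = "SIGMA F:Pow {V \<in> Am m. y \<in> V}. G0 m F"
          have fI: "finite ?I"
          proof (rule finite_SigmaI)
            show "finite (Pow {V \<in> Am m. y \<in> V})" using pfA by simp
            fix F show "finite (G0 m F)" using G0[of m F] by (simp add: spec_def)
          qed
          have "{A \<in> g m. y \<in> A} \<subseteq> (\<lambda>(F,G). Pm m F \<inter> N G) ` ?I"
          proof
            fix A assume A: "A \<in> {A \<in> g m. y \<in> A}"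
            then obtain F G where FG: "A = Pm m F \<inter> N G" "finite F" "F \<subseteq> Am m" "G \<in> G0 m F"
              using False by (auto simp: g_def)
            have "F \<subseteq> {V \<in> Am m. y \<in> V}"
            proof
              fix V assume V: "V \<in> F"
              have "y \<in> U V (2*m)" using A FG(1) V by (auto simp: Pm_def)
              moreover have "V \<in> \<alpha>" using V FG(3) Am\<alpha>[of m] by blast
              moreover have "2*m \<ge> 1" using False by simp
              ultimately have "U V (2*m) \<subseteq> V" using Usub by blast
              then show "V \<in> {V \<in> Am m. y \<in> V}" using V FG(3) \<open>y \<in> U V (2*m)\<close> by auto
            qed
            then have "(F, G) \<in> ?I" using FG(4) by simp
            then show "A \<in> (\<lambda>(F,G). Pm m F \<inter> N G) ` ?I" using FG(1) by (intro image_eqI[of _ _ "(F,G)"]) simp_all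
          qed
          from finite_subset[OF this finite_imageI[OF fI]] show ?thesis .
        qed
      qed
    qed
  next
    show "\<forall>C\<in>\<gamma>. cozero_set X C"
    proof
      fix C assume "C \<in> \<gamma>"
      then obtain m where "C \<in> g m" by (auto simp: \<gamma>_def)
      then obtain F G where m: "m \<noteq> 0" and C: "C = Pm m F \<inter> N G" "finite F" "F \<subseteq> Am m" "G \<in> G0 m F"
        by (auto simp: g_def split: if_splits)
      have G: "finite G" "G \<subseteq> Am m \<times> {1..m}" using G0[of m F] C(4) by (auto simp: spec_def GG_def)
      have eq: "C = topspace X \<inter> \<Inter>((\<lambda>V. U V (2*m)) ` F \<union> (\<lambda>p. topspace X - Z p) ` G)"
        using C(1) by (auto simp: Pm_def N_def)
      have cz: "\<forall>c\<in>(\<lambda>V. U V (2*m)) ` F \<union> (\<lambda>p. topspace X - Z p) ` G. cozero_set X c"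
      proof
        fix c assume "c \<in> (\<lambda>V. U V (2*m)) ` F \<union> (\<lambda>p. topspace X - Z p) ` G"
        then consider V where "V \<in> F" "c = U V (2*m)" | p where "p \<in> G" "c = topspace X - Z p" by blast
        then show "cozero_set X c"
        proof cases
          case 1
          then have "V \<in> \<alpha>" using C(3) Am\<alpha>[of m] by blast
          moreover have "m \<ge> 1" using m by simp
          ultimately show ?thesis using Ucoz 1(2) by simp
        next
          case 2
          then have "p \<in> Am m \<times> {1..m}" using G(2) by blast
          then have "fst p \<in> Am m" "snd p \<ge> 1" by (auto simp: mem_Times_iff)
          then have "fst p \<in> \<alpha>" "snd p \<ge> 1" using Am\<alpha>[of m] by blast+
          then have "zero_set X (Z p)" using Uzero by (simp add: Z_def)
          then show ?thesis using 2 cozero_diff_zero by simp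
        qed
      qed
      have fin: "finite ((\<lambda>V. U V (2*m)) ` F \<union> (\<lambda>p. topspace X - Z p) ` G)" using C(2) G(1) by simp
      from cozero_Inter[OF fin cz] show "cozero_set X C" unfolding eq .
    qed
  next
    show "\<Union>\<gamma> = W"
    proof
      show "\<Union>\<gamma> \<subseteq> W"
      proof
        fix x assume "x \<in> \<Union>\<gamma>"
        then obtain m C where "C \<in> g m" "x \<in> C" by (auto simp: \<gamma>_def)
        then obtain F G where C: "C = Pm m F \<inter> N G" "G \<in> G0 m F"
          by (auto simp: g_def split: if_splits)
        then have "G \<in> GG m F" using G0[of m F] by (auto simp: spec_def)
        then show "x \<in> W" using C(1) \<open>x \<in> C\<close> by (auto simp: GG_def)
      qed
      show "W \<subseteq> \<Union>\<gamma>"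
      proof
        fix x assume xW: "x \<in> W"
        obtain Fb where Fb: "finite Fb" "Fb \<subseteq> insert (topspace X) (S U)" "x \<in> \<Inter>Fb" "\<Inter>Fb \<subseteq> W"
          using gen_basic[OF genW xW] by blast
        define Pos where "Pos = Fb \<inter> \<alpha>"
        define Neg where "Neg = {B \<in> Fb. \<exists>V n. V \<in> \<alpha> \<and> n \<ge> 1 \<and> B = topspace X - U V (2*n-1)}"
        have "\<forall>B\<in>Neg. \<exists>p. fst p \<in> \<alpha> \<and> snd p \<ge> 1 \<and> B = topspace X - Z p"
        proof
          fix B assume "B \<in> Neg"
          then obtain V n where "V \<in> \<alpha>" "n \<ge> 1" "B = topspace X - U V (2*n-1)" by (auto simp: Neg_def)
          then show "\<exists>p. fst p \<in> \<alpha> \<and> snd p \<ge> 1 \<and> B = topspace X - Z p"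
            by (intro exI[of _ "(V,n)"]) (simp add: Z_def)
        qed
        then obtain pn where pn: "\<And>B. B \<in> Neg \<Longrightarrow> fst (pn B) \<in> \<alpha> \<and> snd (pn B) \<ge> 1 \<and> B = topspace X - Z (pn B)"
          by metis
        define G where "G = pn ` Neg"
        have cases: "B = topspace X \<or> B \<in> Pos \<or> B \<in> Neg" if "B \<in> Fb" for B
          using that Fb(2) by (auto simp: S_def Pos_def Neg_def)
        have xtop: "x \<in> topspace X" using xW Wsub by auto
        have xB: "x \<in> B" if "B \<in> Fb" for B using Fb(3) that by auto
        have cls: "\<exists>k. V \<in> ga k" if "V \<in> \<alpha>" for V using ga(1) that by auto
        have finPos: "finite Pos" using Fb(1) by (simp add: Pos_def)
        have finNeg: "finite Neg" using Fb(1) by (simp add: Neg_def)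
        have Gfin: "finite G" using finNeg by (simp add: G_def)
        have e1: "eventually (\<lambda>m. \<forall>V\<in>Pos. V \<in> Am m) sequentially"
        proof (rule eventually_ball_finite[OF finPos], rule ballI)
          fix V assume "V \<in> Pos"
          then obtain k where "V \<in> ga k" using cls by (auto simp: Pos_def)
          then show "eventually (\<lambda>m. V \<in> Am m) sequentially"
            unfolding eventually_sequentially Am_def by (intro exI[of _ k]) auto
        qed
        have e2: "eventually (\<lambda>m. \<forall>V\<in>Pos. x \<in> U V (2*m)) sequentially"
        proof (rule eventually_ball_finite[OF finPos], rule ballI)
          fix V assume V: "V \<in> Pos"
          then have "V \<in> \<alpha>" "x \<in> V" using xB by (auto simp: Pos_def)
          then obtain j where j: "j \<ge> 1" "x \<in> U V j" using urep_mem[of X V "U V" x] U by blast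
          have "x \<in> U V (2*m)" if "m \<ge> j" for m
            using urep_mono[of X V "U V" j "2*m"] U \<open>V \<in> \<alpha>\<close> j that by auto
          then show "eventually (\<lambda>m. x \<in> U V (2*m)) sequentially"
            unfolding eventually_sequentially by blast
        qed
        have e3: "eventually (\<lambda>m. \<forall>p\<in>G. fst p \<in> Am m \<and> snd p \<le> m) sequentially"
        proof (rule eventually_ball_finite[OF Gfin], rule ballI)
          fix p assume "p \<in> G"
          then have "fst p \<in> \<alpha>" using pn by (auto simp: G_def)
          then obtain k where "fst p \<in> ga k" using cls by blast
          then show "eventually (\<lambda>m. fst p \<in> Am m \<and> snd p \<le> m) sequentially"
            unfolding eventually_sequentially Am_def by (intro exI[of _ "max k (snd p)"]) auto
        qed
        have e4: "eventually (\<lambda>m. m \<ge> (1::nat)) sequentially" by (rule eventually_ge_at_top)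
        have "eventually (\<lambda>m. (\<forall>V\<in>Pos. V \<in> Am m) \<and> (\<forall>V\<in>Pos. x \<in> U V (2*m)) \<and>
                 (\<forall>p\<in>G. fst p \<in> Am m \<and> snd p \<le> m) \<and> m \<ge> 1) sequentially"
          using e1 e2 e3 e4 by (intro eventually_conj)
        then obtain m where m: "\<forall>V\<in>Pos. V \<in> Am m" "\<forall>V\<in>Pos. x \<in> U V (2*m)"
             "\<forall>p\<in>G. fst p \<in> Am m \<and> snd p \<le> m" "m \<ge> 1"
          unfolding eventually_sequentially by auto
        have GPhi: "G \<subseteq> Am m \<times> {1..m}"
        proof
          fix p assume p: "p \<in> G"
          then have "snd p \<ge> 1" using pn by (auto simp: G_def)
          then show "p \<in> Am m \<times> {1..m}" using m(3) p by (cases p) auto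
        qed
        have "Pm m Pos \<inter> N G \<subseteq> W"
        proof
          fix y assume y: "y \<in> Pm m Pos \<inter> N G"
          have "y \<in> \<Inter>Fb"
          proof
            fix B assume B: "B \<in> Fb"
            from cases[OF B] consider "B = topspace X" | "B \<in> Pos" | "B \<in> Neg" by blast
            then show "y \<in> B"
            proof cases
              case 1 then show ?thesis using y by (simp add: Pm_def)
            next
              case 2
              then have "y \<in> U B (2*m)" using y by (auto simp: Pm_def)
              moreover have "U B (2*m) \<subseteq> B" using Usub 2 m(4) by (auto simp: Pos_def)
              ultimately show ?thesis by blast
            next
              case 3
              then have "pn B \<in> G" by (simp add: G_def)
              then have "y \<notin> Z (pn B)" "y \<in> topspace X" using y by (auto simp: N_def)
              then show ?thesis using pn[OF 3] by blast
            qed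
          qed
          then show "y \<in> W" using Fb(4) by blast
        qed
        then have GGin: "G \<in> GG m Pos" using Gfin GPhi by (simp add: GG_def)
        have xNG: "\<forall>i\<in>G. x \<notin> Z i"
        proof
          fix i assume "i \<in> G"
          then obtain B where B: "B \<in> Neg" "i = pn B" by (auto simp: G_def)
          then have "x \<in> B" using xB by (auto simp: Neg_def)
          then show "x \<notin> Z i" using pn[OF B(1)] B(2) by blast
        qed
        obtain G' where G': "G' \<in> G0 m Pos" "\<forall>i\<in>G'. x \<notin> Z i"
          using G0[of m Pos] GGin xNG unfolding spec_def by blast
        have "x \<in> Pm m Pos \<inter> N G'" using xtop m(2) G'(2) by (auto simp: Pm_def N_def)
        moreover have "Pos \<subseteq> Am m" using m(1) by blast
        then have "Pm m Pos \<inter> N G' \<in> g m" using m(4) finPos G'(1) unfolding g_def by auto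
        ultimately show "x \<in> \<Union>\<gamma>" unfolding \<gamma>_def by blast
      qed
    qed
  qed
qed


end
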